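(* Let the number of buffer lanes satisfy $L>1$, the number of colors satisfy $C>1$, and the lane width satisfy $W>1$. Then for every $n\in\mathbb{N}$ there exists an upstream sequence of colors $c_1,\dots,c_N\in\{1,\dots,C\}$ such that the minimum number of color changes achievable under the ``store-then-retrieve'' regime is at least $n$ larger than the minimum number of color changes achievable under ``flexible storage and retrieval''.
   Context: Paint shop problem with a multi-lane buffer: an upstream sequence of $N$ cars with colors $c_1,\dots,c_N\in\{1,\dots,C\}$ is processed in order. The buffer consists of $L$ lanes, each a first-in-first-out queue of capacity $W$. At each step exactly one operation is performed: either a store operation, which removes the first remaining car of the upstream sequence and appends it to the back of a lane that is not full; or a retrieve operation, which removes the front car of a nonempty lane and appends it to the end of the downstream sequence. The process ends when the upstream sequence and the buffer are both empty, so the downstream sequence is a permutation of the $N$ cars. The number of color changes of a solution is the number of indices $k$ with $1\le k<N$ such that the $k$-th and $(k+1)$-st cars of the downstream sequence have different colors. Under ``flexible storage and retrieval'', store and retrieve operations may be performed in any order (whenever valid). Under ``store-then-retrieve'', starting from an empty buffer the operations alternate in phases: a storage phase in which cars are stored until the buffer is completely full (or the upstream sequence is exhausted), followed by a retrieval phase in which cars are retrieved until the buffer is completely empty; these phases repeat until all cars have been processed. In each regime, the minimum is taken over all valid operation sequences obeying that regime. *)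

theory Defs
  imports Main
begin

text \<open>A state: (upstream colors, lanes (each a FIFO queue, front = head), downstream colors).
  Only colors matter for the number of color changes, so cars are represented by their colors.\<close>
type_synonym state = "nat list \<times> nat list list \<times> nat list"

definition store_step :: "nat \<Rightarrow> nat \<Rightarrow> state \<Rightarrow> state \<Rightarrow> bool" where
  "store_step L W s s' \<longleftrightarrow>
     (\<exists>x u B d i. s = (x # u, B, d) \<and> i < L \<and> length (B ! i) < W \<and>
        s' = (u, B[i := (B ! i) @ [x]], d))"

definition retr_step :: "nat \<Rightarrow> state \<Rightarrow> state \<Rightarrow> bool" where
  "retr_step L s s' \<longleftrightarrow>
     (\<exists>u B d i y q. s = (u, B, d) \<and> i < L \<and> B ! i = y # q \<and>
        s' = (u, B[i := q], d @ [y]))"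

definition empty_buffer :: "nat \<Rightarrow> nat list list" where
  "empty_buffer L = replicate L []"

definition init_state :: "nat \<Rightarrow> nat list \<Rightarrow> state" where
  "init_state L c = (c, empty_buffer L, [])"

definition final_state :: "nat \<Rightarrow> nat list \<Rightarrow> state" where
  "final_state L d = ([], empty_buffer L, d)"

definition flex_solution :: "nat \<Rightarrow> nat \<Rightarrow> nat list \<Rightarrow> nat list \<Rightarrow> bool" where
  "flex_solution L W c d \<longleftrightarrow>
     (\<lambda>s s'. store_step L W s s' \<or> retr_step L s s')\<^sup>*\<^sup>* (init_state L c) (final_state L d)"

definition buffer_full :: "nat \<Rightarrow> state \<Rightarrow> bool" where
  "buffer_full W s \<longleftrightarrow> (\<forall>q \<in> set (fst (snd s)). length q = W)"

definition str_phase :: "nat \<Rightarrow> nat \<Rightarrow> state \<Rightarrow> state \<Rightarrow> bool" where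
  "str_phase L W s s' \<longleftrightarrow>
     (\<exists>m. (store_step L W)\<^sup>*\<^sup>* s m \<and> (fst m = [] \<or> buffer_full W m) \<and>
          (retr_step L)\<^sup>*\<^sup>* m s' \<and> fst (snd s') = empty_buffer L)"

definition str_solution :: "nat \<Rightarrow> nat \<Rightarrow> nat list \<Rightarrow> nat list \<Rightarrow> bool" where
  "str_solution L W c d \<longleftrightarrow> (str_phase L W)\<^sup>*\<^sup>* (init_state L c) (final_state L d)"

definition color_changes :: "nat list \<Rightarrow> nat" where
  "color_changes d = card {k. k + 1 < length d \<and> d ! k \<noteq> d ! (k + 1)}"

definition min_flex :: "nat \<Rightarrow> nat \<Rightarrow> nat list \<Rightarrow> nat" where
  "min_flex L W c = (LEAST k. \<exists>d. flex_solution L W c d \<and> color_changes d = k)"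

definition min_str :: "nat \<Rightarrow> nat \<Rightarrow> nat list \<Rightarrow> nat" where
  "min_str L W c = (LEAST k. \<exists>d. str_solution L W c d \<and> color_changes d = k)"

end

theory Submission
  imports Defs "HOL-Library.Multiset"
begin

abbreviation FS :: "nat \<Rightarrow> nat \<Rightarrow> state \<Rightarrow> state \<Rightarrow> bool" where
  "FS L W \<equiv> (\<lambda>s s'. store_step L W s s' \<or> retr_step L s s')"

lemma fin_S: "finite {k. k + 1 < length d \<and> P k}"
  by (rule finite_subset[of _ "{..<length d}"]) auto

lemma fin_S': "finite {k. Suc k < length d \<and> P k}"
  by (rule finite_subset[of _ "{..<length d}"]) auto

lemma cc_replicate: "color_changes (replicate n x) = 0"
  unfolding color_changes_def by (simp add: nth_replicate cong: conj_cong)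

lemma cc_append_ge: "color_changes xs + color_changes ys \<le> color_changes (xs @ ys)"
proof -
  let ?S = "\<lambda>d. {k. k + 1 < length d \<and> d ! k \<noteq> d ! (k + 1)}"
  have sub: "?S xs \<union> (\<lambda>k. k + length xs) ` ?S ys \<subseteq> ?S (xs @ ys)"
    by (auto simp: nth_append)
  have disj: "?S xs \<inter> (\<lambda>k. k + length xs) ` ?S ys = {}" by auto
  have "card (?S xs \<union> (\<lambda>k. k + length xs) ` ?S ys) = card (?S xs) + card ((\<lambda>k. k + length xs) ` ?S ys)"
    by (rule card_Un_disjoint) (auto simp: fin_S' disj)
  also have "card ((\<lambda>k. k + length xs) ` ?S ys) = card (?S ys)"
    by (rule card_image) (auto simp: inj_on_def)
  finally have "card (?S xs) + card (?S ys) = card (?S xs \<union> (\<lambda>k. k + length xs) ` ?S ys)" by simp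
  also have "\<dots> \<le> card (?S (xs @ ys))" by (rule card_mono[OF fin_S sub])
  finally show ?thesis unfolding color_changes_def .
qed

lemma cc_append_le: "color_changes (xs @ ys) \<le> color_changes xs + color_changes ys + 1"
proof -
  let ?S = "\<lambda>d. {k. k + 1 < length d \<and> d ! k \<noteq> d ! (k + 1)}"
  have sub: "?S (xs @ ys) \<subseteq> ?S xs \<union> {length xs - 1} \<union> (\<lambda>k. k + length xs) ` ?S ys"
  proof
    fix k assume k: "k \<in> ?S (xs @ ys)"
    show "k \<in> ?S xs \<union> {length xs - 1} \<union> (\<lambda>k. k + length xs) ` ?S ys"
    proof (cases "k + 1 < length xs")
      case True then show ?thesis using k by (auto simp: nth_append)
    next
      case False
      show ?thesis
      proof (cases "k + 1 = length xs")
        case True then show ?thesis by auto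
      next
        case False2: False
        with False have "length xs \<le> k" by auto
        then have "k - length xs \<in> ?S ys" "k = (k - length xs) + length xs"
          using k by (auto simp: nth_append Suc_diff_le)
        then show ?thesis by blast
      qed
    qed
  qed
  have "card (?S (xs @ ys)) \<le> card (?S xs \<union> {length xs - 1} \<union> (\<lambda>k. k + length xs) ` ?S ys)"
    by (rule card_mono[OF _ sub]) (simp add: fin_S')
  also have "\<dots> \<le> card (?S xs \<union> {length xs - 1}) + card ((\<lambda>k. k + length xs) ` ?S ys)"
    by (rule card_Un_le)
  also have "\<dots> \<le> card (?S xs) + 1 + card (?S ys)"
  proof -
    have c1: "card (?S xs \<union> {length xs - 1}) \<le> card (?S xs) + card {length xs - 1}"
      by (rule card_Un_le)
    have c2: "card ((\<lambda>k. k + length xs) ` ?S ys) \<le> card (?S ys)"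
      by (rule card_image_le) (rule fin_S)
    show ?thesis using c1 c2 by simp
  qed
  finally show ?thesis unfolding color_changes_def by simp
qed

lemma cc_pos:
  assumes "a \<in> set e" "b \<in> set e" "a \<noteq> b"
  shows "color_changes e \<ge> 1"
proof (rule ccontr)
  assume "\<not> color_changes e \<ge> 1"
  then have "card {k. k + 1 < length e \<and> e ! k \<noteq> e ! (k + 1)} = 0"
    unfolding color_changes_def by simp
  then have "{k. k + 1 < length e \<and> e ! k \<noteq> e ! (k + 1)} = {}"
  proof -
    have "finite {k. k + 1 < length e \<and> e ! k \<noteq> e ! (k + 1)}"
      by (rule finite_subset[of _ "{..<length e}"]) auto
    then show ?thesis using \<open>card _ = 0\<close> by (simp only: card_0_eq)
  qed
  then have adj: "\<And>k. k + 1 < length e \<Longrightarrow> e ! k = e ! (k + 1)" by blast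
  have all: "\<And>k. k < length e \<Longrightarrow> e ! k = e ! 0"
  proof -
    fix k show "k < length e \<Longrightarrow> e ! k = e ! 0"
      by (induction k) (simp, metis Suc_eq_plus1 Suc_lessD adj)
  qed
  from assms obtain i j where "i < length e" "a = e ! i" "j < length e" "b = e ! j"
    by (auto simp: in_set_conv_nth)
  with all assms(3) show False by auto
qed

lemma mset_concat_upd:
  "i < length Bs \<Longrightarrow> mset (concat (Bs[i := q])) + mset (Bs ! i) = mset (concat Bs) + mset q"
proof (induction Bs arbitrary: i)
  case Nil then show ?case by simp
next
  case (Cons b Bs) then show ?case by (cases i) (auto simp: algebra_simps)
qed

lemma len_concat_le: "(\<forall>q\<in>set Bs. length q \<le> W) \<Longrightarrow> length (concat Bs) \<le> length Bs * W"
  by (induction Bs) auto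

lemma len_concat_eq: "(\<forall>q\<in>set Bs. length q = W) \<Longrightarrow> length (concat Bs) = length Bs * W"
  by (induction Bs) auto

lemma store1: "i < L \<Longrightarrow> length (B ! i) < W \<Longrightarrow>
   store_step L W (y # u, B, d) (u, B[i := B ! i @ [y]], d)"
  unfolding store_step_def by blast

lemma retr1: "i < L \<Longrightarrow> B ! i = y # q \<Longrightarrow> retr_step L (u, B, d) (u, B[i := q], d @ [y])"
  unfolding retr_step_def by blast

lemma store_lane:
  "i < length B \<Longrightarrow> i < L \<Longrightarrow> length (B ! i) + length x \<le> W \<Longrightarrow>
   (store_step L W)\<^sup>*\<^sup>* (x @ u, B, d) (u, B[i := B ! i @ x], d)"
proof (induction x arbitrary: B)
  case Nil then show ?case by simp
next
  case (Cons y x)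
  let ?B = "B[i := B ! i @ [y]]"
  have "store_step L W (y # x @ u, B, d) (x @ u, ?B, d)"
    using Cons.prems by (intro store1) auto
  moreover have "(store_step L W)\<^sup>*\<^sup>* (x @ u, ?B, d) (u, ?B[i := ?B ! i @ x], d)"
    using Cons.prems by (intro Cons.IH) auto
  ultimately show ?case using Cons.prems
    by (auto intro: converse_rtranclp_into_rtranclp)
qed

lemma retr_lane:
  "i < length B \<Longrightarrow> i < L \<Longrightarrow> (retr_step L)\<^sup>*\<^sup>* (u, B, d) (u, B[i := []], d @ B ! i)"
proof (induction "B ! i" arbitrary: B d)
  case Nil
  then have "B[i := []] = B" by (metis list_update_id)
  then show ?case using Nil by (metis append_Nil2 rtranclp.rtrancl_refl)
next
  case (Cons y q)
  let ?B = "B[i := q]"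
  have "retr_step L (u, B, d) (u, ?B, d @ [y])"
    using Cons by (intro retr1) auto
  moreover have "(retr_step L)\<^sup>*\<^sup>* (u, ?B, d @ [y]) (u, ?B[i := []], (d @ [y]) @ ?B ! i)"
    using Cons by (intro Cons.hyps) auto
  moreover have "?B[i := []] = B[i := []]" by simp
  moreover have "(d @ [y]) @ ?B ! i = d @ B ! i"
  proof -
    have "B ! i = y # q" using Cons.hyps(2) by simp
    then show ?thesis using Cons.prems by simp
  qed
  ultimately show ?case
    using converse_rtranclp_into_rtranclp[of "retr_step L" "(u, B, d)" "(u, ?B, d @ [y])"] by simp
qed

lemma store_FS: "(store_step L W)\<^sup>*\<^sup>* s t \<Longrightarrow> (FS L W)\<^sup>*\<^sup>* s t"
  by (induction rule: rtranclp_induct) (auto intro: rtranclp.rtrancl_into_rtrancl)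

lemma retr_FS: "(retr_step L)\<^sup>*\<^sup>* s t \<Longrightarrow> (FS L W)\<^sup>*\<^sup>* s t"
  by (induction rule: rtranclp_induct) (auto intro: rtranclp.rtrancl_into_rtrancl)

lemma stream:
  "i < length B \<Longrightarrow> i < L \<Longrightarrow> B ! i = [] \<Longrightarrow> 0 < W \<Longrightarrow>
   (FS L W)\<^sup>*\<^sup>* (x @ u, B, d) (u, B, d @ x)"
proof (induction x arbitrary: d)
  case Nil then show ?case by simp
next
  case (Cons y x)
  have "store_step L W (y # x @ u, B, d) (x @ u, B[i := [y]], d)"
    using store1[of i L B W y "x @ u" d] Cons.prems by simp
  moreover have "retr_step L (x @ u, B[i := [y]], d) (x @ u, (B[i := [y]])[i := []], d @ [y])"
    using Cons.prems by (intro retr1) auto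
  moreover have "(B[i := [y]])[i := []] = B" using Cons.prems by (metis list_update_id list_update_overwrite)
  ultimately have s1: "FS L W (y # x @ u, B, d) (x @ u, B[i := [y]], d)"
     and s2: "FS L W (x @ u, B[i := [y]], d) (x @ u, B, d @ [y])" by auto
  have s3: "(FS L W)\<^sup>*\<^sup>* (x @ u, B, d @ [y]) (u, B, (d @ [y]) @ x)"
    using Cons by blast
  have "(FS L W)\<^sup>*\<^sup>* (y # x @ u, B, d) (u, B, (d @ [y]) @ x)"
    by (rule converse_rtranclp_into_rtranclp[OF s1 converse_rtranclp_into_rtranclp[OF s2 s3]])
  then show ?case by simp
qed


lemma store_fill:
  "n \<le> L \<Longrightarrow> length x = n * W \<Longrightarrow>
   \<exists>B'. (store_step L W)\<^sup>*\<^sup>* (x @ u, replicate L [], d) (u, B', d) \<and> length B' = L \<and>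
        (\<forall>i<n. length (B' ! i) = W) \<and> (\<forall>i. n \<le> i \<and> i < L \<longrightarrow> B' ! i = [])"
proof (induction n arbitrary: x u)
  case 0 then show ?case by (intro exI[of _ "replicate L []"]) auto
next
  case (Suc n)
  let ?x1 = "take (n * W) x" and ?x2 = "drop (n * W) x"
  have x: "x = ?x1 @ ?x2" by simp
  have l1: "length ?x1 = n * W" using Suc.prems by simp
  have l2: "length ?x2 = W" using Suc.prems by simp
  obtain B' where B': "(store_step L W)\<^sup>*\<^sup>* (?x1 @ (?x2 @ u), replicate L [], d) (?x2 @ u, B', d)"
    "length B' = L" "\<forall>i<n. length (B' ! i) = W" "\<forall>i. n \<le> i \<and> i < L \<longrightarrow> B' ! i = []"
    using Suc.IH[OF _ l1, of "?x2 @ u"] Suc.prems by auto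
  have "(store_step L W)\<^sup>*\<^sup>* (?x2 @ u, B', d) (u, B'[n := B' ! n @ ?x2], d)"
    using B' Suc.prems l2 by (intro store_lane) auto
  moreover have "B' ! n = []" using B' Suc.prems by auto
  ultimately have "(store_step L W)\<^sup>*\<^sup>* (?x2 @ u, B', d) (u, B'[n := ?x2], d)" by simp
  then have "(store_step L W)\<^sup>*\<^sup>* (?x1 @ (?x2 @ u), replicate L [], d) (u, B'[n := ?x2], d)"
    by (rule rtranclp_trans[OF B'(1)])
  then have "(store_step L W)\<^sup>*\<^sup>* (x @ u, replicate L [], d) (u, B'[n := ?x2], d)"
    by (simp only: append.assoc[symmetric] append_take_drop_id)
  then show ?case using B' l2 Suc.prems
    by (intro exI[of _ "B'[n := ?x2]"]) (auto simp: nth_list_update)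
qed

lemma retr_empty_aux:
  "length B = L \<Longrightarrow> (\<forall>i. k \<le> i \<and> i < L \<longrightarrow> B ! i = []) \<Longrightarrow>
   \<exists>e. (retr_step L)\<^sup>*\<^sup>* (u, B, d) (u, replicate L [], d @ e)"
proof (induction k arbitrary: B d)
  case 0
  then have "B = replicate L []" by (intro nth_equalityI) auto
  then show ?case by (intro exI[of _ "[]"]) auto
next
  case (Suc k)
  show ?case
  proof (cases "k < L")
    case True
    have r: "(retr_step L)\<^sup>*\<^sup>* (u, B, d) (u, B[k := []], d @ B ! k)"
      using Suc.prems True by (intro retr_lane) auto
    have pr: "\<forall>i. k \<le> i \<and> i < L \<longrightarrow> B[k := []] ! i = []"
    proof (intro allI impI)
      fix i assume i: "k \<le> i \<and> i < L"
      show "B[k := []] ! i = []"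
      proof (cases "i = k")
        case True then show ?thesis using i Suc.prems by simp
      next
        case False then have "Suc k \<le> i" using i by simp
        then show ?thesis using i Suc.prems False by simp
      qed
    qed
    have lB: "length (B[k := []]) = L" using Suc.prems by simp
    obtain e where e: "(retr_step L)\<^sup>*\<^sup>* (u, B[k := []], d @ B ! k) (u, replicate L [], (d @ B ! k) @ e)"
      using Suc.IH[OF lB pr] by blast
    have "(retr_step L)\<^sup>*\<^sup>* (u, B, d) (u, replicate L [], (d @ B ! k) @ e)"
      by (rule rtranclp_trans[OF r e])
    then show ?thesis by (intro exI[of _ "B ! k @ e"]) simp
  next
    case False
    then have "\<forall>i. k \<le> i \<and> i < L \<longrightarrow> B ! i = []" by auto
    then show ?thesis using Suc.IH Suc.prems(1) by blast
  qed
qed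

lemma retr_empty: "length B = L \<Longrightarrow> \<exists>e. (retr_step L)\<^sup>*\<^sup>* (u, B, d) (u, replicate L [], d @ e)"
proof -
  assume "length B = L"
  moreover have "\<forall>i. L \<le> i \<and> i < L \<longrightarrow> B ! i = []" by auto
  ultimately show ?thesis using retr_empty_aux[of B L L] by blast
qed

lemma str_exists:
  "length u = m * (L * W) \<Longrightarrow> \<exists>d'. (str_phase L W)\<^sup>*\<^sup>* (u, replicate L [], d) ([], replicate L [], d')"
proof (induction m arbitrary: u d)
  case 0 then show ?case by auto
next
  case (Suc m)
  let ?x = "take (L * W) u" and ?r = "drop (L * W) u"
  have lx: "length ?x = L * W" using Suc.prems by simp
  have lr: "length ?r = m * (L * W)" using Suc.prems by simp
  obtain B' where B': "(store_step L W)\<^sup>*\<^sup>* (?x @ ?r, replicate L [], d) (?r, B', d)"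
    "length B' = L" "\<forall>i<L. length (B' ! i) = W"
    using store_fill[of L L ?x W ?r d] lx by (auto simp: mult.commute)
  have full: "buffer_full W (?r, B', d)"
    unfolding buffer_full_def using B' by (auto simp: in_set_conv_nth)
  obtain e where e: "(retr_step L)\<^sup>*\<^sup>* (?r, B', d) (?r, replicate L [], d @ e)"
    using retr_empty B'(2) by blast
  have "str_phase L W (u, replicate L [], d) (?r, replicate L [], d @ e)"
    unfolding str_phase_def empty_buffer_def using B'(1) full e by auto
  moreover obtain d' where "(str_phase L W)\<^sup>*\<^sup>* (?r, replicate L [], d @ e) ([], replicate L [], d')"
    using Suc.IH[OF lr] by blast
  ultimately show ?case by (meson converse_rtranclp_into_rtranclp)
qed

lemma store_inv:
  assumes "(store_step L W)\<^sup>*\<^sup>* (u, B, d) m" "length B = L" "\<forall>q\<in>set B. length q \<le> W"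
  shows "\<exists>k B'. m = (drop k u, B', d) \<and> k \<le> length u \<and> length B' = L \<and>
     mset (concat B') = mset (concat B) + mset (take k u) \<and> (\<forall>q\<in>set B'. length q \<le> W)"
  using assms(1)
proof (induction rule: rtranclp_induct)
  case base then show ?case using assms by (intro exI[of _ 0] exI[of _ B]) auto
next
  case (step m m')
  then obtain k B' where IH: "m = (drop k u, B', d)" "k \<le> length u" "length B' = L"
     "mset (concat B') = mset (concat B) + mset (take k u)" "\<forall>q\<in>set B'. length q \<le> W" by blast
  from step(2) obtain x u2 B0 d0 i where st: "m = (x # u2, B0, d0)" "i < L" "length (B0 ! i) < W"
    "m' = (u2, B0[i := B0 ! i @ [x]], d0)"
    unfolding store_step_def by blast
  have dk: "drop k u = x # u2" "B0 = B'" "d0 = d" using st IH by auto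
  then have kl: "k < length u" by (metis drop_eq_Nil2 list.distinct(1) not_le_imp_less)
  have xu: "x = u ! k" "u2 = drop (Suc k) u" using Cons_nth_drop_Suc[OF kl] dk by auto
  have ms: "mset (concat (B'[i := B' ! i @ [x]])) = mset (concat B') + {#x#}"
    using mset_concat_upd[of i B' "B' ! i @ [x]"] st IH by simp
  have "\<forall>q\<in>set (B'[i := B' ! i @ [x]]). length q \<le> W"
  proof
    fix q assume "q \<in> set (B'[i := B' ! i @ [x]])"
    then have "q \<in> insert (B' ! i @ [x]) (set B')" using set_update_subset_insert by fast
    then show "length q \<le> W" using IH(5) st(3) dk(2) by auto
  qed
  then show ?case using st dk xu kl IH ms
    by (intro exI[of _ "Suc k"] exI[of _ "B'[i := B' ! i @ [x]]"]) (auto simp: take_Suc_conv_app_nth)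
qed

lemma retr_inv:
  assumes "(retr_step L)\<^sup>*\<^sup>* (u, B, d) t" "length B = L"
  shows "\<exists>B' e. t = (u, B', d @ e) \<and> length B' = L \<and> mset (concat B') + mset e = mset (concat B)"
  using assms(1)
proof (induction rule: rtranclp_induct)
  case base then show ?case using assms by (intro exI[of _ B] exI[of _ "[]"]) auto
next
  case (step m m')
  then obtain B' e where IH: "m = (u, B', d @ e)" "length B' = L" "mset (concat B') + mset e = mset (concat B)"
    by blast
  from step(2) obtain u0 B0 d0 i y q where st: "m = (u0, B0, d0)" "i < L" "B0 ! i = y # q"
    "m' = (u0, B0[i := q], d0 @ [y])"
    unfolding retr_step_def by blast
  have h: "add_mset y (mset (concat (B'[i := q]))) = mset (concat B')"
    using mset_concat_upd[of i B' q] st IH by simp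
  have "mset (concat B) = mset e + add_mset y (mset (concat (B'[i := q])))"
    unfolding h using IH(3) by (simp add: add.commute)
  then have "mset (concat (B'[i := q])) + mset (e @ [y]) = mset (concat B)"
    by simp
  then show ?case using st IH
    by (intro exI[of _ "B'[i := q]"] exI[of _ "e @ [y]"]) auto
qed

lemma phase:
  assumes "str_phase L W (u, replicate L [], d) s'"
  shows "\<exists>k e. s' = (drop k u, replicate L [], d @ e) \<and> mset e = mset (take k u) \<and>
     (L * W \<le> length u \<longrightarrow> k = L * W)"
proof -
  obtain m where m: "(store_step L W)\<^sup>*\<^sup>* (u, replicate L [], d) m" "fst m = [] \<or> buffer_full W m"
    "(retr_step L)\<^sup>*\<^sup>* m s'" "fst (snd s') = empty_buffer L"
    using assms unfolding str_phase_def by blast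
  obtain k B' where kB: "m = (drop k u, B', d)" "k \<le> length u" "length B' = L"
     "mset (concat B') = mset (take k u)" "\<forall>q\<in>set B'. length q \<le> W"
    using store_inv[OF m(1)] by auto
  obtain B'' e where Be: "s' = (drop k u, B'', d @ e)" "mset (concat B'') + mset e = mset (concat B')"
    using retr_inv[of L "drop k u" B' d s'] m(3) kB by auto
  have B'': "B'' = replicate L []" using m(4) Be by (simp add: empty_buffer_def)
  have me: "mset e = mset (take k u)" using Be(2) kB(4) B'' by simp
  have lk: "length (concat B') = k"
    using kB(4) kB(2) by (metis length_take min.absorb2 size_mset)
  have "L * W \<le> length u \<longrightarrow> k = L * W"
  proof
    assume lu: "L * W \<le> length u"
    have le: "k \<le> L * W" using len_concat_le[OF kB(5)] kB(3) lk by simp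
    show "k = L * W"
    proof (cases "fst m = []")
      case True then have "length u \<le> k" using kB(1) by simp
      with le lu show ?thesis by simp
    next
      case False then have "buffer_full W m" using m(2) by blast
      then have "\<forall>q\<in>set B'. length q = W" using kB(1) unfolding buffer_full_def by simp
      then show ?thesis using len_concat_eq[of B' W] kB(3) lk by simp
    qed
  qed
  then show ?thesis using Be B'' me by blast
qed


definition blk :: "nat \<Rightarrow> nat \<Rightarrow> nat list" where
  "blk K j = (if even j then replicate (K - 1) 1 @ [2] else 2 # replicate (K - 1) 1)"

lemma len_blk: "0 < K \<Longrightarrow> length (blk K j) = K"
  by (simp add: blk_def)

lemma set_blk: "set (blk K j) \<subseteq> {1, 2}"
  by (auto simp: blk_def)

lemma set_blk2: "1 < K \<Longrightarrow> 1 \<in> set (blk K j) \<and> 2 \<in> set (blk K j)"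
  by (auto simp: blk_def)

lemma len_concat_blk: "0 < K \<Longrightarrow> length (concat (map (blk K) xs)) = length xs * K"
  by (induction xs) (auto simp: len_blk)

lemma concat_blk_rep:
  "concat (map (blk K) [0..<4 * p]) = concat (replicate p (blk K 0 @ blk K 1 @ blk K 2 @ blk K 3))"
proof (induction p)
  case 0 then show ?case by simp
next
  case (Suc p)
  have e: "4 * Suc p = Suc (Suc (Suc (Suc (4 * p))))" by simp
  have b: "blk K (4 * p) = blk K 0" "blk K (Suc (4 * p)) = blk K 1"
     "blk K (Suc (Suc (4 * p))) = blk K 2" "blk K (Suc (Suc (Suc (4 * p)))) = blk K 3"
    by (auto simp: blk_def)
  have r: "replicate (Suc p) (blk K 0 @ blk K 1 @ blk K 2 @ blk K 3) =
      replicate p (blk K 0 @ blk K 1 @ blk K 2 @ blk K 3) @ [blk K 0 @ blk K 1 @ blk K 2 @ blk K 3]"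
    by (simp add: replicate_append_same)
  show ?case unfolding e r using Suc b by simp
qed

lemma str_inv:
  assumes "(str_phase L W)\<^sup>*\<^sup>* (concat (map (blk (L * W)) [0..<N]), replicate L [], []) s"
    and K: "2 \<le> L * W"
  shows "\<exists>j\<le>N. \<exists>d. s = (concat (map (blk (L * W)) [j..<N]), replicate L [], d) \<and> j \<le> color_changes d"
  using assms(1)
proof (induction rule: rtranclp_induct)
  case base then show ?case by (intro exI[of _ 0]) auto
next
  case (step s s')
  then obtain j d where IH: "j \<le> N" "s = (concat (map (blk (L * W)) [j..<N]), replicate L [], d)"
    "j \<le> color_changes d" by blast
  obtain k e where ke: "s' = (drop k (concat (map (blk (L * W)) [j..<N])), replicate L [], d @ e)"
    "mset e = mset (take k (concat (map (blk (L * W)) [j..<N])))"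
    "L * W \<le> length (concat (map (blk (L * W)) [j..<N])) \<longrightarrow> k = L * W"
    using phase[of L W _ d s'] step(2) IH(2) by blast
  show ?case
  proof (cases "j < N")
    case False
    then have jN: "j = N" using IH by simp
    then have "e = []" using ke(2) by simp
    then show ?thesis using ke(1) jN IH by (intro exI[of _ N]) auto
  next
    case True
    have U: "concat (map (blk (L * W)) [j..<N]) = blk (L * W) j @ concat (map (blk (L * W)) [Suc j..<N])"
      using True by (simp add: upt_conv_Cons)
    have lb: "length (blk (L * W) j) = L * W" using K len_blk[of "L * W" j] by linarith
    then have kK: "k = L * W" using ke(3) U by simp
    have "set e = set (blk (L * W) j)" using ke(2) U kK lb by (metis append_eq_conv_conj mset_eq_setD)
    then have "1 \<le> color_changes e" using set_blk2[of "L * W" j] K by (intro cc_pos[of 1 e 2]) auto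
    then have "Suc j \<le> color_changes (d @ e)" using cc_append_ge[of d e] IH(3) by simp
    moreover have "s' = (concat (map (blk (L * W)) [Suc j..<N]), replicate L [], d @ e)"
      using ke(1) U kK lb by simp
    ultimately show ?thesis using True by (intro exI[of _ "Suc j"]) auto
  qed
qed

lemma str_lower:
  assumes "str_solution L W (concat (map (blk (L * W)) [0..<N])) d" "2 \<le> L * W"
  shows "N \<le> color_changes d"
proof -
  obtain j d' where j: "j \<le> N" "final_state L d = (concat (map (blk (L * W)) [j..<N]), replicate L [], d')"
    "j \<le> color_changes d'"
    using str_inv[of L W N "final_state L d"] assms unfolding str_solution_def init_state_def empty_buffer_def
    by blast
  have "j = N"
  proof (rule ccontr)
    assume "j \<noteq> N"
    then have "j < N" using j by simp
    then have "concat (map (blk (L * W)) [j..<N]) \<noteq> []"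
      by (simp add: upt_conv_Cons blk_def)
    then show False using j(2) by (simp add: final_state_def)
  qed
  then show ?thesis using j by (simp add: final_state_def)
qed


lemma flex_period:
  assumes L: "1 < L" and W: "1 < W"
  defines "r \<equiv> replicate (L * W - 1) (1::nat)"
  shows "(FS L W)\<^sup>*\<^sup>* ((blk (L * W) 0 @ blk (L * W) 1 @ blk (L * W) 2 @ blk (L * W) 3) @ u, replicate L [], d)
           (u, replicate L [], d @ (r @ r @ r @ [2, 2, 2, 2] @ r))"
proof -
  let ?E = "replicate L ([] :: nat list)"
  let ?B1 = "?E[0 := [2, 2]]"
  let ?B2 = "?E[0 := [2, 2], 1 := [2, 2]]"
  have init: "(blk (L * W) 0 @ blk (L * W) 1 @ blk (L * W) 2 @ blk (L * W) 3) @ u =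
     r @ [2, 2] @ (r @ r) @ [2, 2] @ r @ u"
    by (simp add: blk_def r_def)
  have t1: "(FS L W)\<^sup>*\<^sup>* (r @ ([2, 2] @ (r @ r) @ [2, 2] @ r @ u), ?E, d) ([2, 2] @ (r @ r) @ [2, 2] @ r @ u, ?E, d @ r)"
    using L W by (intro stream) auto
  have t2: "(FS L W)\<^sup>*\<^sup>* ([2, 2] @ ((r @ r) @ [2, 2] @ r @ u), ?E, d @ r) ((r @ r) @ [2, 2] @ r @ u, ?E[0 := ?E ! 0 @ [2, 2]], d @ r)"
    using L W by (intro store_FS store_lane) auto
  have t3: "(FS L W)\<^sup>*\<^sup>* ((r @ r) @ ([2, 2] @ r @ u), ?B1, d @ r) ([2, 2] @ r @ u, ?B1, (d @ r) @ (r @ r))"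
    using L W by (intro stream) auto
  have t4: "(FS L W)\<^sup>*\<^sup>* ([2, 2] @ (r @ u), ?B1, (d @ r) @ (r @ r)) (r @ u, ?B1[1 := ?B1 ! 1 @ [2, 2]], (d @ r) @ (r @ r))"
    using L W by (intro store_FS store_lane) auto
  have t5: "(retr_step L)\<^sup>*\<^sup>* (r @ u, ?B2, (d @ r) @ (r @ r)) (r @ u, ?B2[0 := []], ((d @ r) @ (r @ r)) @ ?B2 ! 0)"
    using L by (intro retr_lane) auto
  have t6: "(retr_step L)\<^sup>*\<^sup>* (r @ u, ?B2[0 := []], ((d @ r) @ (r @ r)) @ [2, 2])
      (r @ u, (?B2[0 := []])[1 := []], (((d @ r) @ (r @ r)) @ [2, 2]) @ (?B2[0 := []]) ! 1)"
    using L by (intro retr_lane) auto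
  have EE: "(?B2[0 := []])[1 := []] = ?E"
  proof (rule nth_equalityI)
    show "length ((?B2[0 := []])[1 := []]) = length ?E" by simp
  next
    fix i assume "i < length ((?B2[0 := []])[1 := []])"
    then have i: "i < L" by simp
    show "(?B2[0 := []])[1 := []] ! i = ?E ! i"
    proof (cases "i = 1")
      case True then show ?thesis using i by simp
    next
      case False
      then have "(?B2[0 := []])[1 := []] ! i = ?B2[0 := []] ! i" by simp
      also have "\<dots> = ?E ! i" using i False by (cases "i = 0") simp_all
      finally show ?thesis .
    qed
  qed
  have t7: "(FS L W)\<^sup>*\<^sup>* (r @ u, ?E, (((d @ r) @ (r @ r)) @ [2, 2]) @ [2, 2]) (u, ?E, ((((d @ r) @ (r @ r)) @ [2, 2]) @ [2, 2]) @ r)"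
    using L W by (intro stream) auto
  have B1: "?E[0 := ?E ! 0 @ [2, 2]] = ?B1" using L by simp
  have B2: "?B1[1 := ?B1 ! 1 @ [2, 2]] = ?B2" using L by simp
  have o1: "?B2 ! 0 = [2, 2]" "(?B2[0 := []]) ! 1 = [2, 2]" using L by auto
  have "(FS L W)\<^sup>*\<^sup>* (r @ [2, 2] @ (r @ r) @ [2, 2] @ r @ u, ?E, d)
           (u, ?E, ((((d @ r) @ (r @ r)) @ [2, 2]) @ [2, 2]) @ r)"
    by (rule rtranclp_trans[OF t1 rtranclp_trans[OF t2[unfolded B1] rtranclp_trans[OF t3
       rtranclp_trans[OF t4[unfolded B2] rtranclp_trans[OF retr_FS[OF t5, unfolded o1]
       rtranclp_trans[OF retr_FS[OF t6, unfolded o1 EE] t7]]]]]])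
  then show ?thesis unfolding init by simp
qed

lemma flex_iter:
  assumes L: "1 < L" and W: "1 < W"
  shows "(FS L W)\<^sup>*\<^sup>* (concat (replicate q (blk (L * W) 0 @ blk (L * W) 1 @ blk (L * W) 2 @ blk (L * W) 3)) @ u, replicate L [], d)
           (u, replicate L [], d @ concat (replicate q (replicate (L * W - 1) (1::nat) @ replicate (L * W - 1) 1 @ replicate (L * W - 1) 1 @ [2, 2, 2, 2] @ replicate (L * W - 1) 1)))"
proof (induction q arbitrary: d)
  case 0 then show ?case by simp
next
  case (Suc q)
  let ?P = "blk (L * W) 0 @ blk (L * W) 1 @ blk (L * W) 2 @ blk (L * W) 3"
  let ?out = "replicate (L * W - 1) (1::nat) @ replicate (L * W - 1) 1 @ replicate (L * W - 1) 1 @ [2, 2, 2, 2] @ replicate (L * W - 1) 1"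
  have a: "(FS L W)\<^sup>*\<^sup>* (?P @ (concat (replicate q ?P) @ u), replicate L [], d)
      (concat (replicate q ?P) @ u, replicate L [], d @ ?out)"
    by (rule flex_period[OF L W])
  have b: "(FS L W)\<^sup>*\<^sup>* (concat (replicate q ?P) @ u, replicate L [], d @ ?out)
      (u, replicate L [], (d @ ?out) @ concat (replicate q ?out))"
    by (rule Suc.IH)
  show ?case using rtranclp_trans[OF a b] by simp
qed

lemma cc_out: "color_changes (r @ r @ r @ [2, 2, 2, 2] @ r) \<le> 2" if "r = replicate m (1::nat)"
proof -
  have "r @ r @ r @ [2, 2, 2, 2] @ r = replicate (3 * m) 1 @ (replicate 4 2 @ replicate m 1)"
    using that by (simp add: replicate_add[symmetric] numeral_eq_Suc)
  moreover have "color_changes (replicate (3 * m) (1::nat) @ (replicate 4 2 @ replicate m 1)) \<le> 2"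
    using cc_append_le[of "replicate (3 * m) (1::nat)" "replicate 4 2 @ replicate m 1"]
      cc_append_le[of "replicate 4 (2::nat)" "replicate m 1"] by (simp add: cc_replicate)
  ultimately show ?thesis by simp
qed

lemma cc_concat_rep: "color_changes x \<le> 2 \<Longrightarrow> color_changes (concat (replicate q x)) \<le> 3 * q"
proof (induction q)
  case 0 then show ?case by (simp add: color_changes_def)
next
  case (Suc q)
  then show ?case using cc_append_le[of x "concat (replicate q x)"] by simp
qed

theorem theorem1:
  fixes L C W :: nat
  assumes "L > 1" and "C > 1" and "W > 1"
  shows "\<forall>n::nat. \<exists>c::nat list. set c \<subseteq> {1..C} \<and> min_str L W c \<ge> min_flex L W c + n"
proof
  fix n :: nat
  let ?K = "L * W"
  let ?c = "concat (map (blk ?K) [0..<4 * n])"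
  let ?r = "replicate (?K - 1) (1::nat)"
  let ?out = "?r @ ?r @ ?r @ [2, 2, 2, 2] @ ?r"
  have K: "2 \<le> ?K" using mult_le_mono[of 1 L 2 W] assms by simp
  have setc: "set ?c \<subseteq> {1..C}" using set_blk assms(2) by fastforce
  have flex: "flex_solution L W ?c (concat (replicate n ?out))"
    using flex_iter[OF assms(1) assms(3), of n "[]" "[]"]
    unfolding flex_solution_def init_state_def final_state_def empty_buffer_def concat_blk_rep by simp
  have ccf: "color_changes (concat (replicate n ?out)) \<le> 3 * n"
    by (rule cc_concat_rep) (rule cc_out, rule refl)
  have mf: "min_flex L W ?c \<le> 3 * n"
  proof -
    have "min_flex L W ?c \<le> color_changes (concat (replicate n ?out))"
      unfolding min_flex_def using flex by (intro Least_le) blast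
    then show ?thesis using ccf by simp
  qed
  obtain d0 where d0: "(str_phase L W)\<^sup>*\<^sup>* (?c, replicate L [], []) ([], replicate L [], d0)"
  proof -
    have lc: "length ?c = 4 * n * (L * W)" using len_concat_blk[of "L * W" "[0..<4 * n]"] assms(1,3) by simp
    show ?thesis using str_exists[OF lc, of "[]"] that by blast
  qed
  then have "\<exists>k d. str_solution L W ?c d \<and> color_changes d = k"
    unfolding str_solution_def init_state_def final_state_def empty_buffer_def by blast
  then have "\<exists>d. str_solution L W ?c d \<and> color_changes d = min_str L W ?c"
    unfolding min_str_def by (rule LeastI_ex)
  then have ms: "4 * n \<le> min_str L W ?c" using str_lower K by metis
  show "\<exists>c::nat list. set c \<subseteq> {1..C} \<and> min_str L W c \<ge> min_flex L W c + n"
    using setc mf ms by (intro exI[of _ ?c]) auto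
qed

end
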